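(* Let $G$ be a maximal $3$-$\gamma_{c}$-vertex critical graph of order $n$ with clique number $\omega$. Then $\omega\leq n-3$, and equality holds if and only if $G$ is the cycle $C_{5}$.
   Context: All graphs are finite, simple and connected. A set $D\subseteq V(G)$ is a connected dominating set of $G$ if every vertex of $G$ is in $D$ or adjacent to a vertex of $D$, and $G[D]$ is connected; $\gamma_{c}(G)$ is the minimum cardinality of such a set. $G$ is $k$-$\gamma_{c}$-edge critical if $\gamma_{c}(G)=k$ and $\gamma_{c}(G+uv)<k$ for every pair of non-adjacent vertices $u,v$. A $2$-connected graph $G$ is $k$-$\gamma_{c}$-vertex critical if $\gamma_{c}(G)=k$ and $\gamma_{c}(G-v)<k$ for every $v\in V(G)$. $G$ is maximal $k$-$\gamma_{c}$-vertex critical if it is both $k$-$\gamma_{c}$-edge critical and $k$-$\gamma_{c}$-vertex critical. *)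

theory Defs
  imports Main
begin

definition simple_graph :: "'a set \<Rightarrow> 'a set set \<Rightarrow> bool" where
  "simple_graph V E \<longleftrightarrow> finite V \<and> (\<forall>e\<in>E. e \<subseteq> V \<and> card e = 2)"

definition connected_set :: "'a set set \<Rightarrow> 'a set \<Rightarrow> bool" where
  "connected_set E S \<longleftrightarrow> S \<noteq> {} \<and>
     (\<forall>u\<in>S. \<forall>v\<in>S. \<exists>xs. xs \<noteq> [] \<and> hd xs = u \<and> last xs = v \<and> set xs \<subseteq> S \<and>
        (\<forall>i < length xs - 1. {xs ! i, xs ! Suc i} \<in> E))"

definition connected_graph :: "'a set \<Rightarrow> 'a set set \<Rightarrow> bool" where
  "connected_graph V E \<longleftrightarrow> connected_set E V"

definition delete_vertex :: "'a \<Rightarrow> 'a set set \<Rightarrow> 'a set set" where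
  "delete_vertex v E = {e \<in> E. v \<notin> e}"

definition two_connected :: "'a set \<Rightarrow> 'a set set \<Rightarrow> bool" where
  "two_connected V E \<longleftrightarrow> card V \<ge> 3 \<and> connected_graph V E \<and>
     (\<forall>v\<in>V. connected_graph (V - {v}) (delete_vertex v E))"

definition connected_dominating_set :: "'a set \<Rightarrow> 'a set set \<Rightarrow> 'a set \<Rightarrow> bool" where
  "connected_dominating_set V E D \<longleftrightarrow> D \<subseteq> V \<and>
     (\<forall>v\<in>V. v \<in> D \<or> (\<exists>u\<in>D. {u, v} \<in> E)) \<and> connected_set E D"

definition gamma_c :: "'a set \<Rightarrow> 'a set set \<Rightarrow> nat" where
  "gamma_c V E = (LEAST k. \<exists>D. connected_dominating_set V E D \<and> card D = k)"

definition edge_critical :: "nat \<Rightarrow> 'a set \<Rightarrow> 'a set set \<Rightarrow> bool" where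
  "edge_critical k V E \<longleftrightarrow> gamma_c V E = k \<and>
     (\<forall>u\<in>V. \<forall>v\<in>V. u \<noteq> v \<and> {u, v} \<notin> E \<longrightarrow> gamma_c V (insert {u, v} E) < k)"

definition vertex_critical :: "nat \<Rightarrow> 'a set \<Rightarrow> 'a set set \<Rightarrow> bool" where
  "vertex_critical k V E \<longleftrightarrow> two_connected V E \<and> gamma_c V E = k \<and>
     (\<forall>v\<in>V. gamma_c (V - {v}) (delete_vertex v E) < k)"

definition maximal_vertex_critical :: "nat \<Rightarrow> 'a set \<Rightarrow> 'a set set \<Rightarrow> bool" where
  "maximal_vertex_critical k V E \<longleftrightarrow> edge_critical k V E \<and> vertex_critical k V E"

definition is_clique :: "'a set set \<Rightarrow> 'a set \<Rightarrow> bool" where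
  "is_clique E K \<longleftrightarrow> (\<forall>u\<in>K. \<forall>v\<in>K. u \<noteq> v \<longrightarrow> {u, v} \<in> E)"

definition clique_number :: "'a set \<Rightarrow> 'a set set \<Rightarrow> nat" where
  "clique_number V E = Max {card K | K. K \<subseteq> V \<and> is_clique E K}"

definition is_C5 :: "'a set \<Rightarrow> 'a set set \<Rightarrow> bool" where
  "is_C5 V E \<longleftrightarrow> (\<exists>f. bij_betw f {0..<5::nat} V \<and>
     E = {{f i, f ((i + 1) mod 5)} | i. i < 5})"

end

theory Submission
  imports Defs
begin

lemma walk_edge:
  assumes "connected_set E' S" "u \<in> S" "w \<in> S" "u \<noteq> w"
  shows "\<exists>z\<in>S. {u, z} \<in> E'"
proof -
  from assms obtain xs where xs: "xs \<noteq> []" "hd xs = u" "last xs = w" "set xs \<subseteq> S"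
    "\<forall>i < length xs - 1. {xs ! i, xs ! Suc i} \<in> E'"
    unfolding connected_set_def by blast
  obtain y ys where y: "xs = y # ys" using xs(1) by (cases xs) auto
  have "ys \<noteq> []" using y xs assms(4) by auto
  then obtain z zs where z: "ys = z # zs" by (cases ys) auto
  have "{xs ! 0, xs ! Suc 0} \<in> E'" using xs(5) y z by auto
  then show ?thesis using y z xs by auto
qed

lemma gamma_le:
  assumes "connected_dominating_set V E D"
  shows "gamma_c V E \<le> card D"
  unfolding gamma_c_def by (rule Least_le) (use assms in blast)

lemma gamma_ex:
  assumes "connected_dominating_set V E D"
  shows "\<exists>D'. connected_dominating_set V E D' \<and> card D' = gamma_c V E"
proof -
  have "\<exists>k. \<exists>D. connected_dominating_set V E D \<and> card D = k" using assms by blast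
  then show ?thesis unfolding gamma_c_def by (rule LeastI_ex)
qed

lemma conn1: "connected_set E {a}"
  unfolding connected_set_def by (auto intro!: exI[of _ "[a]"])

lemma conn2:
  assumes "{a, b} \<in> E"
  shows "connected_set E {a, b}"
  unfolding connected_set_def
proof (intro conjI ballI)
  fix p q assume p: "p \<in> {a, b}" and q: "q \<in> {a, b}"
  show "\<exists>xs. xs \<noteq> [] \<and> hd xs = p \<and> last xs = q \<and> set xs \<subseteq> {a, b} \<and>
        (\<forall>i<length xs - 1. {xs ! i, xs ! Suc i} \<in> E)"
  proof (cases "p = q")
    case True
    then show ?thesis using p by (intro exI[of _ "[p]"]) auto
  next
    case False
    then have "{p, q} \<in> E" using p q assms by (auto simp: insert_commute)
    then show ?thesis using p q by (intro exI[of _ "[p, q]"]) auto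
  qed
qed auto

theorem corollary3p8:
  fixes V :: "'a set" and E :: "'a set set"
  assumes "simple_graph V E"
    and "connected_graph V E"
    and "maximal_vertex_critical 3 V E"
  shows "clique_number V E \<le> card V - 3 \<and>
         (clique_number V E = card V - 3 \<longleftrightarrow> is_C5 V E)"
proof -
  have fin: "finite V" and edges: "\<And>e. e \<in> E \<Longrightarrow> e \<subseteq> V \<and> card e = 2"
    using assms(1) unfolding simple_graph_def by auto
  have g3: "gamma_c V E = 3" and tc: "two_connected V E"
    and vc: "\<And>v. v \<in> V \<Longrightarrow> gamma_c (V - {v}) (delete_vertex v E) < 3"
    using assms(3) unfolding maximal_vertex_critical_def vertex_critical_def by auto
  have cV: "card V \<ge> 3" and cG: "\<And>v. v \<in> V \<Longrightarrow> connected_graph (V - {v}) (delete_vertex v E)"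
    using tc unfolding two_connected_def by auto
  have sym: "\<And>x y. {x, y} \<in> E \<longleftrightarrow> {y, x} \<in> E" by (simp add: insert_commute)
  have edge_ne: "\<And>a b. {a, b} \<in> E \<Longrightarrow> a \<noteq> b"
    using edges by fastforce
  have edge_in: "\<And>a b. {a, b} \<in> E \<Longrightarrow> a \<in> V \<and> b \<in> V"
    using edges by blast
  have nodom1: "\<exists>u\<in>V. u \<noteq> a \<and> {a, u} \<notin> E" if "a \<in> V" for a
  proof (rule ccontr)
    assume "\<not> ?thesis"
    then have "connected_dominating_set V E {a}"
      unfolding connected_dominating_set_def using that conn1 by auto
    then have "gamma_c V E \<le> 1" using gamma_le by fastforce
    then show False using g3 by simp
  qed
  have nodom2: "\<exists>u\<in>V. u \<noteq> a \<and> u \<noteq> b \<and> {a, u} \<notin> E \<and> {b, u} \<notin> E"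
    if "a \<in> V" "b \<in> V" "{a, b} \<in> E" for a b
  proof (rule ccontr)
    assume "\<not> ?thesis"
    then have "connected_dominating_set V E {a, b}"
      unfolding connected_dominating_set_def using that conn2[OF that(3)] by auto
    then have "gamma_c V E \<le> card {a, b}" using gamma_le by fastforce
    also have "\<dots> \<le> 2" by (simp add: card_insert_le_m1)
    finally show False using g3 by simp
  qed
  have nbr: "\<exists>z\<in>V. z \<noteq> x \<and> z \<noteq> y \<and> {x, z} \<in> E" if xy: "x \<in> V" "y \<in> V" "x \<noteq> y" for x y
  proof -
    have "card (V - {x, y}) \<ge> 1" using cV fin that by (simp add: card_Diff_subset)
    then obtain t where t: "t \<in> V" "t \<noteq> x" "t \<noteq> y"
      by (metis One_nat_def DiffD1 DiffD2 Suc_le_eq card_gt_0_iff ex_in_conv insertCI)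
    have "connected_set (delete_vertex y E) (V - {y})" using cG[OF that(2)]
      unfolding connected_graph_def by simp
    from walk_edge[OF this, where u=x and w=t] obtain z where "z \<in> V - {y}" "{x, z} \<in> delete_vertex y E"
      using t xy by auto
    then have "z \<in> V" "z \<noteq> y" "{x, z} \<in> E" by (auto simp: delete_vertex_def)
    moreover have "z \<noteq> x" using edge_ne[OF calculation(3)] by simp
    ultimately show ?thesis by blast
  qed
  have P4: "\<exists>a\<in>V. \<exists>b\<in>V. a \<noteq> v \<and> b \<noteq> v \<and> a \<noteq> b \<and> {a, b} \<in> E \<and> {a, v} \<notin> E \<and> {b, v} \<notin> E \<and>
      (\<forall>u\<in>V. u = v \<or> u = a \<or> u = b \<or> {a, u} \<in> E \<or> {b, u} \<in> E)" if v: "v \<in> V" for v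
  proof -
    let ?V = "V - {v}" and ?E = "delete_vertex v E"
    have sub: "?E \<subseteq> E" unfolding delete_vertex_def by auto
    have "connected_dominating_set ?V ?E ?V"
      using cG[OF v] unfolding connected_graph_def connected_dominating_set_def by auto
    from gamma_ex[OF this] obtain D where D: "connected_dominating_set ?V ?E D"
      "card D = gamma_c ?V ?E" by blast
    have cD: "card D < 3" using D(2) vc[OF v] by simp
    have DV: "D \<subseteq> ?V" and Ddom: "\<forall>x\<in>?V. x \<in> D \<or> (\<exists>u\<in>D. {u, x} \<in> ?E)"
      and Dc: "connected_set ?E D" using D(1) unfolding connected_dominating_set_def by auto
    have "D \<noteq> {}" using Dc unfolding connected_set_def by auto
    moreover have "finite D" using DV fin finite_subset by blast
    ultimately have "card D \<noteq> 0" by simp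
    then have "card D = 1 \<or> card D = 2" using cD by linarith
    then show ?thesis
    proof
      assume "card D = 1"
      then obtain a where a: "D = {a}" by (auto simp: card_Suc_eq)
      have aV: "a \<in> V" "a \<noteq> v" using a DV by auto
      have dom: "\<forall>u\<in>V. u = v \<or> u = a \<or> {a, u} \<in> E" using Ddom a sub by auto
      show ?thesis
      proof (cases "{a, v} \<in> E")
        case True
        then show ?thesis using nodom1[OF aV(1)] dom by auto
      next
        case False
        obtain w where w: "w \<in> V" "w \<noteq> v" "{v, w} \<in> E" using nbr[OF v aV(1)] aV by auto
        have "w \<noteq> a" using w False sym by auto
        then have aw: "{a, w} \<in> E" using dom w by auto
        from nodom2[OF aV(1) w(1) aw] obtain u where "u \<in> V" "u \<noteq> a" "u \<noteq> w"
          "{a, u} \<notin> E" "{w, u} \<notin> E" by blast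
        then show ?thesis using dom w by (auto simp: insert_commute)
      qed
    next
      assume "card D = 2"
      then obtain a b where ab: "D = {a, b}" "a \<noteq> b" by (auto simp: card_2_iff)
      have abV: "a \<in> V" "b \<in> V" "a \<noteq> v" "b \<noteq> v" using ab DV by auto
      from walk_edge[OF Dc, where u=a and w=b] ab obtain z where z: "z \<in> {a, b}" "{a, z} \<in> ?E" by blast
      have "{a, z} \<in> E" using z sub by blast
      then have "z \<noteq> a" using edge_ne by blast
      then have abE: "{a, b} \<in> E" using z sub by auto
      have dom: "\<forall>u\<in>V. u = v \<or> u = a \<or> u = b \<or> {a, u} \<in> E \<or> {b, u} \<in> E"
        using Ddom ab sub by auto
      have "{a, v} \<notin> E"
        using nodom2[OF abV(1,2) abE] dom by auto
      moreover have "{b, v} \<notin> E"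
        using nodom2[OF abV(1,2) abE] dom by auto
      ultimately show ?thesis using abV ab abE dom by blast
    qed
  qed

  have cl: "\<And>K p q. is_clique E K \<Longrightarrow> p \<in> K \<Longrightarrow> q \<in> K \<Longrightarrow> p \<noteq> q \<Longrightarrow> {p, q} \<in> E"
    unfolding is_clique_def by blast
  let ?S = "{card K | K. K \<subseteq> V \<and> is_clique E K}"
  have Sfin: "finite ?S"
    by (rule finite_subset[of _ "card ` Pow V"]) (auto simp: fin)
  have Sne: "?S \<noteq> {}" unfolding is_clique_def by blast
  have om_ge: "card K \<le> clique_number V E" if "K \<subseteq> V" "is_clique E K" for K
    unfolding clique_number_def by (rule Max_ge[OF Sfin]) (use that in blast)
  obtain K0 where K0: "K0 \<subseteq> V" "is_clique E K0" "card K0 = clique_number V E"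
    using Max_in[OF Sfin Sne] unfolding clique_number_def by auto
  have Vne: "V \<noteq> {}" using cV by auto
  have other: "\<exists>y\<in>V. y \<noteq> x" if "x \<in> V" for x
  proof (rule ccontr)
    assume "\<not> ?thesis"
    then have "V \<subseteq> {x}" by auto
    then have "card V \<le> 1" using card_mono[of "{x}" V] by simp
    then show False using cV by simp
  qed
  have bound: "card K + 3 \<le> card V" if K: "K \<subseteq> V" "is_clique E K" for K
  proof (rule ccontr)
    assume "\<not> ?thesis"
    moreover have "card (V - K) = card V - card K" using K fin by (simp add: card_Diff_subset finite_subset)
    moreover have "card K \<le> card V" using K fin card_mono by blast
    ultimately have c: "card (V - K) \<le> 2" by linarith
    have fD: "finite (V - K)" using fin by simp
    have "card (V - K) = 0 \<or> card (V - K) = 1 \<or> card (V - K) = 2" using c by linarith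
    then consider "V - K = {}" | x where "V - K = {x}" | x y where "x \<noteq> y" "V - K = {x, y}"
      using fD by (auto simp: card_1_singleton_iff card_2_iff)
    then show False
    proof cases
      case 1
      then obtain a where a: "a \<in> K" using Vne K by blast
      then obtain u where "u \<in> V" "u \<noteq> a" "{a, u} \<notin> E" using nodom1 K by blast
      then show False using 1 cl[OF K(2) a] by blast
    next
      case (2 x)
      then have xV: "x \<in> V" by auto
      obtain y where "y \<in> V" "y \<noteq> x" using other[OF xV] by blast
      then obtain z where z: "z \<in> V" "z \<noteq> x" "{x, z} \<in> E" using nbr xV by blast
      then have zK: "z \<in> K" using 2 by blast
      then obtain u where u: "u \<in> V" "u \<noteq> z" "{z, u} \<notin> E" using nodom1 K by blast
      show False
      proof (cases "u = x")
        case True then show ?thesis using u z sym by blast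
      next
        case False then show ?thesis using u 2 cl[OF K(2) zK] by blast
      qed
    next
      case (3 x y)
      then have xy: "x \<in> V" "y \<in> V" by auto
      obtain z1 where z1: "z1 \<in> V" "z1 \<noteq> x" "z1 \<noteq> y" "{x, z1} \<in> E" using nbr xy 3 by blast
      obtain z2 where z2: "z2 \<in> V" "z2 \<noteq> x" "z2 \<noteq> y" "{y, z2} \<in> E" using nbr xy 3 by metis
      have z1K: "z1 \<in> K" and z2K: "z2 \<in> K" using z1 z2 3 by auto
      show False
      proof (cases "z1 = z2")
        case True
        obtain u where u: "u \<in> V" "u \<noteq> z1" "{z1, u} \<notin> E" using nodom1 z1 by blast
        have "u \<in> K \<or> u = x \<or> u = y" using u 3 by blast
        then show False using cl[OF K(2) z1K] u z1 z2 True by (auto simp: insert_commute)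
      next
        case False
        then have "{z1, z2} \<in> E" using cl[OF K(2) z1K z2K] by blast
        from nodom2[OF z1(1) z2(1) this] obtain u where u: "u \<in> V" "u \<noteq> z1" "u \<noteq> z2"
          "{z1, u} \<notin> E" "{z2, u} \<notin> E" by blast
        have "u \<in> K \<or> u = x \<or> u = y" using u 3 by blast
        then show False using cl[OF K(2) z1K] u z1 z2 by (auto simp: insert_commute)
      qed
    qed
  qed
  have part1: "clique_number V E \<le> card V - 3" using bound[OF K0(1,2)] K0(3) by linarith
  have om2: "2 \<le> clique_number V E"
  proof -
    obtain x where xV: "x \<in> V" using Vne by blast
    obtain y where "y \<in> V" "y \<noteq> x" using other[OF xV] by blast
    then obtain z where z: "z \<in> V" "z \<noteq> x" "{x, z} \<in> E" using nbr xV by blast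
    have "is_clique E {x, z}" unfolding is_clique_def using z by (auto simp: insert_commute)
    moreover have "{x, z} \<subseteq> V" using z xV by blast
    ultimately have "card {x, z} \<le> clique_number V E" by (rule om_ge[rotated])
    then show ?thesis using z by simp
  qed
  have part2: "is_C5 V E" if eq: "clique_number V E = card V - 3"
  proof -
    have cK: "card K0 = card V - 3" using eq K0 by simp
    have cO: "card (V - K0) = 3"
      using cK cV K0(1) fin by (simp add: card_Diff_subset finite_subset)
    have c2: "2 \<le> card K0" using om2 K0 by simp
    then have "K0 \<noteq> {}" by auto
    then obtain v where v: "v \<in> K0" by blast
    have "finite K0" using K0(1) fin finite_subset by blast
    then have "card (K0 - {v}) \<ge> 1" using c2 v by simp
    then obtain w where w: "w \<in> K0" "w \<noteq> v"
      by (metis Diff_eq_empty_iff One_nat_def card.empty insertCI not_one_le_zero subsetI)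
    have vV: "v \<in> V" and wV: "w \<in> V" using v w K0 by auto
    have clK: "\<And>p q. p \<in> K0 \<Longrightarrow> q \<in> K0 \<Longrightarrow> p \<noteq> q \<Longrightarrow> {p, q} \<in> E" using cl[OF K0(2)] by blast
    have nonK: "p \<in> V - K0" if "q \<in> K0" "p \<in> V" "p \<noteq> q" "{p, q} \<notin> E" for p q
      using clK that by blast
    obtain a1 b1 where ab1: "a1 \<in> V" "b1 \<in> V" "a1 \<noteq> v" "b1 \<noteq> v" "a1 \<noteq> b1" "{a1, b1} \<in> E"
      "{a1, v} \<notin> E" "{b1, v} \<notin> E"
      and dom1: "\<forall>u\<in>V. u = v \<or> u = a1 \<or> u = b1 \<or> {a1, u} \<in> E \<or> {b1, u} \<in> E"
      using P4[OF vV] by blast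
    obtain a2 b2 where ab2: "a2 \<in> V" "b2 \<in> V" "a2 \<noteq> w" "b2 \<noteq> w" "a2 \<noteq> b2" "{a2, b2} \<in> E"
      "{a2, w} \<notin> E" "{b2, w} \<notin> E"
      and dom2: "\<forall>u\<in>V. u = w \<or> u = a2 \<or> u = b2 \<or> {a2, u} \<in> E \<or> {b2, u} \<in> E"
      using P4[OF wV] by blast
    have O1: "a1 \<in> V - K0" "b1 \<in> V - K0" using nonK[OF v] ab1 by auto
    have O2: "a2 \<in> V - K0" "b2 \<in> V - K0" using nonK[OF w(1)] ab2 by auto
    have vw: "{a2, v} \<in> E \<or> {b2, v} \<in> E" using dom2 vV w O2 v by auto
    have wv: "{a1, w} \<in> E \<or> {b1, w} \<in> E" using dom1 wV w O1 w by auto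
    have "card (V - K0 - {a1, b1}) = 1"
      using cO O1 ab1(5) by (simp add: card_Diff_subset)
    then obtain c where c: "V - K0 - {a1, b1} = {c}" by (auto simp: card_1_singleton_iff)
    then have O: "V - K0 = {a1, b1, c}" "c \<noteq> a1" "c \<noteq> b1" using O1 by auto
    have a2O: "a2 \<in> {a1, b1, c}" and b2O: "b2 \<in> {a1, b1, c}" using O O2 by auto
    have "a2 = c \<or> b2 = c"
    proof (rule ccontr)
      assume "\<not> ?thesis"
      then have "a2 \<in> {a1, b1}" "b2 \<in> {a1, b1}" using a2O b2O by auto
      then show False using vw ab1 by auto
    qed
    then obtain d where d: "d \<in> {a1, b1}" "{d, c} \<in> E" "{d, w} \<notin> E" "{c, w} \<notin> E"
      and domw: "\<forall>u\<in>V. u = w \<or> u = d \<or> u = c \<or> {d, u} \<in> E \<or> {c, u} \<in> E"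
      and vdc: "{d, v} \<in> E \<or> {c, v} \<in> E"
    proof
      assume "a2 = c"
      then show ?thesis using that[of b2] ab2 dom2 b2O vw by (auto simp: insert_commute)
    next
      assume "b2 = c"
      then show ?thesis using that[of a2] ab2 dom2 a2O vw by (auto simp: insert_commute)
    qed
    have cv: "{c, v} \<in> E" using vdc d(1) ab1 by auto
    have "\<exists>a b. V - K0 = {a, b, c} \<and> a \<noteq> b \<and> a \<noteq> c \<and> b \<noteq> c \<and> {a, b} \<in> E \<and> {b, c} \<in> E \<and>
       {a, v} \<notin> E \<and> {b, v} \<notin> E \<and> {b, w} \<notin> E \<and> {c, w} \<notin> E \<and> {a, w} \<in> E \<and>
       (\<forall>u\<in>V. u = v \<or> u = a \<or> u = b \<or> {a, u} \<in> E \<or> {b, u} \<in> E) \<and>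
       (\<forall>u\<in>V. u = w \<or> u = b \<or> u = c \<or> {b, u} \<in> E \<or> {c, u} \<in> E)"
    proof (cases "d = a1")
      case True
      show ?thesis
        apply (rule exI[of _ b1], rule exI[of _ a1])
        using True O ab1 d domw dom1 wv by (auto simp: insert_commute)
    next
      case False
      then have "d = b1" using d by auto
      then show ?thesis
        apply -
        apply (rule exI[of _ a1], rule exI[of _ b1])
        using O ab1 d domw dom1 wv by (auto simp: insert_commute)
    qed
    then obtain a b where L: "V - K0 = {a, b, c}" "a \<noteq> b" "a \<noteq> c" "b \<noteq> c" "{a, b} \<in> E" "{b, c} \<in> E"
       "{a, v} \<notin> E" "{b, v} \<notin> E" "{b, w} \<notin> E" "{c, w} \<notin> E" "{a, w} \<in> E"
       and domv: "\<forall>u\<in>V. u = v \<or> u = a \<or> u = b \<or> {a, u} \<in> E \<or> {b, u} \<in> E"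
       and domw': "\<forall>u\<in>V. u = w \<or> u = b \<or> u = c \<or> {b, u} \<in> E \<or> {c, u} \<in> E"
      by blast
    have K0sub: "K0 \<subseteq> {v, w}"
    proof
      fix u assume u: "u \<in> K0"
      show "u \<in> {v, w}"
      proof (rule ccontr)
        assume un: "u \<notin> {v, w}"
        have uV: "u \<in> V" using u K0 by auto
        obtain a3 b3 where ab3: "a3 \<in> V" "b3 \<in> V" "a3 \<noteq> u" "b3 \<noteq> u" "a3 \<noteq> b3" "{a3, b3} \<in> E"
          "{a3, u} \<notin> E" "{b3, u} \<notin> E"
          and dom3: "\<forall>x\<in>V. x = u \<or> x = a3 \<or> x = b3 \<or> {a3, x} \<in> E \<or> {b3, x} \<in> E"
          using P4[OF uV] by blast
        have O3: "a3 \<in> {a, b, c}" "b3 \<in> {a, b, c}" using nonK[OF u] ab3 L(1) by auto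
        have "{a3, v} \<in> E \<or> {b3, v} \<in> E" using dom3 vV un O3 L(1) v by auto
        then have c3: "a3 = c \<or> b3 = c" using O3 L by auto
        have "{a3, w} \<in> E \<or> {b3, w} \<in> E" using dom3 wV un O3 L(1) w by auto
        then have a3: "a3 = a \<or> b3 = a" using O3 L by auto
        have acu: "{a, c} \<in> E" "{a, u} \<notin> E" "{c, u} \<notin> E"
          using c3 a3 ab3 L by (auto simp: insert_commute)
        have "u \<noteq> a" "u \<noteq> b" using u L(1) by auto
        then have bu: "{b, u} \<in> E" using domv uV un acu by auto
        from nodom2[OF _ uV bu] obtain x where x: "x \<in> V" "x \<noteq> b" "x \<noteq> u" "{b, x} \<notin> E" "{u, x} \<notin> E"
          using L(1) by blast
        have "x \<in> K0 \<or> x \<in> {a, b, c}" using x L(1) by blast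
        then show False using clK[OF u, of x] x L acu by (auto simp: insert_commute)
      qed
    qed
    have K0eq: "K0 = {v, w}" using K0sub v w by auto
    have Veq: "V = {v, w, a, b, c}" using K0eq L(1) K0(1) by auto
    have vw_dist: "v \<notin> {a, b, c}" "w \<notin> {a, b, c}" using L(1) v w by auto
    have vwE: "{v, w} \<in> E" using clK v w by auto
    have acE: "{a, c} \<notin> E"
    proof
      assume ac: "{a, c} \<in> E"
      from nodom2[OF _ _ ac] obtain x where x: "x \<in> V" "x \<noteq> a" "x \<noteq> c" "{a, x} \<notin> E" "{c, x} \<notin> E"
        using L(1) by blast
      then show False using Veq L cv by (auto simp: insert_commute)
    qed
    define f where "f = (\<lambda>i::nat. if i = 0 then v else if i = 1 then w else if i = 2 then a
       else if i = 3 then b else c)"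
    have I5: "{0..<5::nat} = {0, 1, 2, 3, 4}" by auto
    have im: "f ` {0..<5} = V" unfolding I5 Veq f_def by auto
    have inj: "inj_on f {0..<5}" unfolding I5 inj_on_def f_def using vw_dist w L by auto
    have Ecyc: "{{f i, f ((i + 1) mod 5)} | i. i < 5} = {{v, w}, {w, a}, {a, b}, {b, c}, {c, v}}"
    proof -
      have "{{f i, f ((i + 1) mod 5)} | i. i < 5} = (\<lambda>i. {f i, f ((i + 1) mod 5)}) ` {0..<5}"
        by auto
      also have "\<dots> = {{v, w}, {w, a}, {a, b}, {b, c}, {c, v}}" unfolding I5 f_def by auto
      finally show ?thesis .
    qed
    have Eeq: "E = {{v, w}, {w, a}, {a, b}, {b, c}, {c, v}}"
    proof
      show "{{v, w}, {w, a}, {a, b}, {b, c}, {c, v}} \<subseteq> E"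
        using vwE L cv by (auto simp: insert_commute)
    next
      show "E \<subseteq> {{v, w}, {w, a}, {a, b}, {b, c}, {c, v}}"
      proof
        fix e assume e: "e \<in> E"
        then have "card e = 2" using edges by blast
        then obtain p q where pq: "e = {p, q}" "p \<noteq> q" by (auto simp: card_2_iff)
        have "p \<in> V" "q \<in> V" using edges e pq by auto
        then have pV: "p \<in> {v, w, a, b, c}" "q \<in> {v, w, a, b, c}" using Veq by auto
        have eE: "{p, q} \<in> E" using e pq by simp
        have ne: "{a, v} \<notin> E" "{b, v} \<notin> E" "{b, w} \<notin> E" "{c, w} \<notin> E" "{a, c} \<notin> E"
          using L acE by auto
        show "e \<in> {{v, w}, {w, a}, {a, b}, {b, c}, {c, v}}"
          unfolding pq(1) using pV(1) pV(2) eE pq(2) ne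
          by (elim insertE emptyE; simp add: insert_commute)
      qed
    qed
    show ?thesis unfolding is_C5_def
      by (rule exI[of _ f]) (use im inj Eeq Ecyc in \<open>auto simp: bij_betw_def\<close>)
  qed
  have part3: "clique_number V E = card V - 3" if c5: "is_C5 V E"
  proof -
    obtain f where "bij_betw f {0..<5::nat} V" using c5 unfolding is_C5_def by blast
    then have "card V = 5" using bij_betw_same_card by fastforce
    then show ?thesis using part1 om2 by simp
  qed
  show ?thesis using part1 part2 part3 by blast
qed

end
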